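(* Let $\varphi:\mathbb B\to\mathbb B$ be slice regular with $\varphi(\mathbb B_I)\subseteq\mathbb B_I$ for some $I\in\mathbb S$. Then for every $f\in H^2(\mathbb B)$, $$\|f^{\odot}\varphi\|_2\le\Big(\frac{1+|\varphi(0)|}{1-|\varphi(0)|}\Big)^{1/2}\|f\|_2,\qquad\|f_{\odot}\varphi\|_2\le\Big(\frac{1+|\varphi(0)|}{1-|\varphi(0)|}\Big)^{1/2}\|f\|_2.$$
   Context: $\mathbb H$ quaternions, $\mathbb S=\{q:q^2=-1\}$, $\mathbb C_I=\mathbb R+I\mathbb R$, $\mathbb B$ open unit ball, $\mathbb B_I=\mathbb B\cap\mathbb C_I$. Slice regular functions on $\mathbb B$ are convergent power series $\sum_nq^na_n$; $\ast$-product $\big(\sum q^na_n\big)\ast\big(\sum q^nb_n\big)=\sum_nq^n\sum_ka_kb_{n-k}$, $\varphi^{\ast0}=1$, $\varphi^{\ast n}=\varphi\ast\varphi^{\ast(n-1)}$. For $f=\sum q^na_n$: $f^{\odot}\varphi=\sum_n\varphi^{\ast n}a_n$, $f_{\odot}\varphi=\sum_na_n\ast\varphi^{\ast n}$. $H^2(\mathbb B)$: regular $f=\sum q^na_n$ with $\|f\|_2^2=\sum|a_n|^2<\infty$. *)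

theory Defs
  imports "HOL-Analysis.Analysis"
begin

text \<open>Quaternions via the Cayley--Dickson construction: the pair (z, w) of complex
numbers stands for z + w j, where j z = cnj z j.  The norm inherited from the
product type, sqrt (norm z ^ 2 + norm w ^ 2), is the usual quaternion modulus.\<close>

type_synonym quat = "complex \<times> complex"

definition qmul :: "quat \<Rightarrow> quat \<Rightarrow> quat" where
  "qmul p q = (fst p * fst q - snd p * cnj (snd q), fst p * snd q + snd p * cnj (fst q))"

definition qone :: quat where "qone = (1, 0)"

definition qreal :: "real \<Rightarrow> quat" where "qreal r = (complex_of_real r, 0)"

fun qpow :: "quat \<Rightarrow> nat \<Rightarrow> quat" where
  "qpow q 0 = qone"
| "qpow q (Suc n) = qmul q (qpow q n)"

definition imag_units :: "quat set" where
  "imag_units = {I. qmul I I = - qone}"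

definition slice :: "quat \<Rightarrow> quat set" where
  "slice I = {x. \<exists>a b::real. x = qreal a + b *\<^sub>R I}"

definition qball :: "quat set" where
  "qball = {q. norm q < 1}"

definition pseries :: "(nat \<Rightarrow> quat) \<Rightarrow> quat \<Rightarrow> quat" where
  "pseries a q = (\<Sum>n. qmul (qpow q n) (a n))"

definition slice_regular_ball :: "(nat \<Rightarrow> quat) \<Rightarrow> bool" where
  "slice_regular_ball a \<longleftrightarrow> (\<forall>q\<in>qball. summable (\<lambda>n. qmul (qpow q n) (a n)))"

definition sprod :: "(nat \<Rightarrow> quat) \<Rightarrow> (nat \<Rightarrow> quat) \<Rightarrow> nat \<Rightarrow> quat" where
  "sprod a b n = (\<Sum>k\<le>n. qmul (a k) (b (n - k)))"

fun spow :: "(nat \<Rightarrow> quat) \<Rightarrow> nat \<Rightarrow> nat \<Rightarrow> quat" where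
  "spow c 0 = (\<lambda>k. if k = 0 then qone else 0)"
| "spow c (Suc m) = sprod c (spow c m)"

definition in_H2 :: "(nat \<Rightarrow> quat) \<Rightarrow> bool" where
  "in_H2 a \<longleftrightarrow> summable (\<lambda>n. (norm (a n))^2)"

definition H2_norm :: "(nat \<Rightarrow> quat) \<Rightarrow> real" where
  "H2_norm a = sqrt (\<Sum>n. (norm (a n))^2)"

text \<open>Coefficients of f^odot phi = sum_n phi^{*n} a_n and of f_odot phi = sum_n a_n * phi^{*n}.
The k-th coefficient of phi^{*n} a_n is (phi^{*n})_k a_n, that of a_n * phi^{*n} is
a_n (phi^{*n})_k.\<close>
definition comp_right :: "(nat \<Rightarrow> quat) \<Rightarrow> (nat \<Rightarrow> quat) \<Rightarrow> nat \<Rightarrow> quat" where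
  "comp_right a c k = (\<Sum>n. qmul (spow c n k) (a n))"

definition comp_left :: "(nat \<Rightarrow> quat) \<Rightarrow> (nat \<Rightarrow> quat) \<Rightarrow> nat \<Rightarrow> quat" where
  "comp_left a c k = (\<Sum>n. qmul (a n) (spow c n k))"

end

theory Submission
  imports Defs "HOL-Computational_Algebra.Polynomial"
begin

definition rt :: "nat \<Rightarrow> nat \<Rightarrow> complex" where
  "rt M j = cis (2*pi*real j/real M)"

lemma cis_pow: "cis a ^ n = cis (real n * a)"
  by (induct n) (simp_all add: algebra_simps cis_mult)

lemma norm_rt[simp]: "norm (rt M j) = 1"
  by (simp add: rt_def)

lemma rou_orth:
  assumes "k < M" "l < M"
  shows "(\<Sum>j<M. rt M j ^ k * cnj (rt M j) ^ l) = (if k = l then of_nat M else 0)"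
proof -
  have M0: "real M > 0" using assms by simp
  define q where "q = cis (2*pi*(real k - real l)/real M)"
  have tm: "rt M j ^ k * cnj (rt M j) ^ l = q ^ j" for j
  proof -
    have "rt M j ^ k * cnj (rt M j) ^ l = cis (real k * (2*pi*real j/real M)) * cis (real l * (- (2*pi*real j/real M)))"
      by (simp only: rt_def cis_cnj cis_pow)
    also have "\<dots> = q ^ j" unfolding cis_mult q_def cis_pow
      using M0 by (intro arg_cong[where f=cis]) (simp add: field_simps)
    finally show ?thesis .
  qed
  show ?thesis
  proof (cases "k = l")
    case True
    then have "q = 1" by (simp add: q_def)
    then show ?thesis using True tm by simp
  next
    case False
    have qM: "q ^ M = 1"
    proof -
      have "q ^ M = cis (2 * pi * (real k - real l))"
        unfolding q_def cis_pow using M0 by (intro arg_cong[where f=cis]) (simp add: field_simps)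
      also have "\<dots> = 1" by (rule cis_multiple_2pi) (simp add: Ints_diff)
      finally show ?thesis .
    qed
    have q1: "q \<noteq> 1"
    proof
      assume "q = 1"
      then have "cos (2*pi*(real k - real l)/real M) = 1"
        unfolding q_def by (metis Re_complex_of_real cis.sel(1) one_complex.sel(1))
      then obtain x :: int where x: "2*pi*(real k - real l)/real M = real_of_int x * 2 * pi"
        by (auto simp: cos_one_2pi_int)
      then have e1: "(2*pi)*(real k - real l) = (2*pi)*(real_of_int x * real M)"
        using M0 by (simp add: field_simps)
      have eq: "real k - real l = real_of_int x * real M"
        by (rule mult_left_cancel[THEN iffD1, OF _ e1]) simp
      have b1: "real k - real l < real M" and b2: "- real M < real k - real l" using assms by auto
      have "x < 1"
      proof (rule ccontr)
        assume "\<not> x < 1" then have "real_of_int x \<ge> 1" by simp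
        then have "real_of_int x * real M \<ge> 1 * real M" by (intro mult_right_mono) auto
        then show False using b1 eq by simp
      qed
      moreover have "x > -1"
      proof (rule ccontr)
        assume "\<not> x > -1" then have "real_of_int x \<le> -1" by simp
        then have "real_of_int x * real M \<le> (-1) * real M" by (intro mult_right_mono) auto
        then show False using b2 eq by simp
      qed
      ultimately have "x = 0" by simp
      then show False using eq False by simp
    qed
    have "(\<Sum>j<M. rt M j ^ k * cnj (rt M j) ^ l) = (\<Sum>j<M. q ^ j)" using tm by simp
    also have "\<dots> = 0" using sum_gp_strict[of q M] q1 qM by simp
    finally show ?thesis using False by simp
  qed
qed

lemma poly_sum_lessThan:
  fixes p :: "'a::comm_semiring_1 poly"
  assumes "degree p < M"
  shows "poly p x = (\<Sum>i<M. coeff p i * x ^ i)"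
proof -
  have "poly p x = (\<Sum>i\<le>degree p. coeff p i * x ^ i)" by (rule poly_altdef)
  also have "\<dots> = (\<Sum>i<M. coeff p i * x ^ i)"
    by (rule sum.mono_neutral_left) (use assms in \<open>auto simp: coeff_eq_0\<close>)
  finally show ?thesis .
qed

lemma parseval_disc:
  fixes F G :: "complex poly" and r :: real
  assumes "degree F < M" "degree G < M"
  shows "(\<Sum>j<M. poly F (of_real r * rt M j) * cnj (poly G (of_real r * rt M j)))
       = of_nat M * (\<Sum>k<M. coeff F k * cnj (coeff G k) * of_real (r^(2*k)))"
proof -
  define X where "X k l = coeff F k * cnj (coeff G l) * of_real r ^ k * of_real r ^ l" for k l
  define Y where "Y j k l = rt M j ^ k * cnj (rt M j) ^ l" for j k l
  have "(\<Sum>j<M. poly F (of_real r * rt M j) * cnj (poly G (of_real r * rt M j)))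
     = (\<Sum>j<M. (\<Sum>k<M. coeff F k * (of_real r * rt M j) ^ k) * cnj (\<Sum>l<M. coeff G l * (of_real r * rt M j) ^ l))"
    by (simp only: poly_sum_lessThan[OF assms(1)] poly_sum_lessThan[OF assms(2)])
  also have "\<dots> = (\<Sum>j<M. \<Sum>k<M. \<Sum>l<M. X k l * Y j k l)"
  proof (intro sum.cong refl)
    fix j
    have te: "coeff F k * (of_real r * w) ^ k * cnj (coeff G l * (of_real r * w) ^ l) = (coeff F k * cnj (coeff G l) * of_real r ^ k * of_real r ^ l) * (w ^ k * cnj w ^ l)" for k l and w :: complex
      by (simp add: power_mult_distrib mult_ac)
    show "(\<Sum>k<M. coeff F k * (of_real r * rt M j) ^ k) * cnj (\<Sum>l<M. coeff G l * (of_real r * rt M j) ^ l) =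
         (\<Sum>k<M. \<Sum>l<M. X k l * Y j k l)"
      unfolding cnj_sum sum_product te X_def Y_def ..
  qed
  also have "\<dots> = (\<Sum>k<M. \<Sum>j<M. \<Sum>l<M. X k l * Y j k l)"
    by (rule sum.swap)
  also have "\<dots> = (\<Sum>k<M. \<Sum>l<M. \<Sum>j<M. X k l * Y j k l)"
    by (rule sum.cong[OF refl]) (rule sum.swap)
  also have "\<dots> = (\<Sum>k<M. \<Sum>l<M. X k l * (\<Sum>j<M. Y j k l))"
    by (simp only: sum_distrib_left)
  also have "\<dots> = (\<Sum>k<M. \<Sum>l<M. if k = l then X k l * of_nat M else 0)"
    by (intro sum.cong refl) (simp add: rou_orth Y_def)
  also have "\<dots> = (\<Sum>k<M. X k k * of_nat M)"
    by (simp add: sum.delta)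
  also have "\<dots> = (\<Sum>k<M. of_nat M * (coeff F k * cnj (coeff G k) * of_real (r^(2*k))))"
  proof (intro sum.cong refl)
    fix k
    have "(of_real (r^(2*k)) :: complex) = of_real r ^ k * of_real r ^ k"
      by (simp add: mult_2 power_add)
    then show "X k k * of_nat M = of_nat M * (coeff F k * cnj (coeff G k) * of_real (r^(2*k)))"
      unfolding X_def by (simp only: ac_simps)
  qed
  also have "\<dots> = of_nat M * (\<Sum>k<M. coeff F k * cnj (coeff G k) * of_real (r^(2*k)))"
    by (simp only: sum_distrib_left)
  finally show ?thesis .
qed

definition Kk :: "complex \<Rightarrow> nat \<Rightarrow> nat \<Rightarrow> complex" where
  "Kk z m n = (if n \<le> m then z^(m-n) else cnj z ^ (n-m))"

definition Uf :: "(nat \<Rightarrow> complex) \<Rightarrow> nat \<Rightarrow> complex \<Rightarrow> complex" where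
  "Uf a N z = (\<Sum>m<N. \<Sum>n<N. a m * cnj (a n) * Kk z m n)"

lemma Kk_simps[simp]:
  "Kk z (Suc m) (Suc n) = Kk z m n" "Kk z 0 0 = 1"
  "Kk z (Suc m) 0 = z ^ Suc m" "Kk z 0 (Suc n) = cnj z ^ Suc n"
  by (auto simp: Kk_def)

lemma Uf_Suc:
  fixes a :: "nat \<Rightarrow> complex" and N :: nat and z :: complex
  defines "g \<equiv> (\<Sum>n<N. a (Suc n) * z^n)"
  shows "Uf a (Suc N) z = a 0 * cnj (a 0) + a 0 * cnj (z * g) + cnj (a 0) * (z * g) + Uf (\<lambda>n. a (Suc n)) N z"
proof -
  have r0: "(\<Sum>n<Suc N. a 0 * cnj (a n) * Kk z 0 n) = a 0 * cnj (a 0) + a 0 * cnj (z * g)"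
  proof -
    have "(\<Sum>n<Suc N. a 0 * cnj (a n) * Kk z 0 n) = a 0 * cnj (a 0) + (\<Sum>n<N. a 0 * (cnj z * (cnj (a (Suc n)) * cnj z ^ n)))"
      by (subst sum.lessThan_Suc_shift) (simp add: mult_ac)
    also have "\<dots> = a 0 * cnj (a 0) + a 0 * cnj (z * g)"
      by (simp add: g_def cnj_sum sum_distrib_left)
    finally show ?thesis .
  qed
  have r1: "(\<Sum>n<Suc N. a (Suc m) * cnj (a n) * Kk z (Suc m) n)
       = cnj (a 0) * (z * (a (Suc m) * z ^ m)) + (\<Sum>n<N. a (Suc m) * cnj (a (Suc n)) * Kk z m n)" for m
    by (subst sum.lessThan_Suc_shift) (simp add: mult_ac)
  have "Uf a (Suc N) z = (\<Sum>n<Suc N. a 0 * cnj (a n) * Kk z 0 n) + (\<Sum>m<N. \<Sum>n<Suc N. a (Suc m) * cnj (a n) * Kk z (Suc m) n)"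
    unfolding Uf_def by (rule sum.lessThan_Suc_shift)
  also have "\<dots> = a 0 * cnj (a 0) + a 0 * cnj (z * g) + ((\<Sum>m<N. cnj (a 0) * (z * (a (Suc m) * z ^ m))) + Uf (\<lambda>n. a (Suc n)) N z)"
    unfolding r0 r1 sum.distrib Uf_def ..
  also have "(\<Sum>m<N. cnj (a 0) * (z * (a (Suc m) * z ^ m))) = cnj (a 0) * (z * g)"
    by (simp add: g_def sum_distrib_left)
  finally show ?thesis by (simp add: add_ac)
qed

lemma Uf_bound:
  fixes a :: "nat \<Rightarrow> complex"
  assumes "norm z \<le> 1"
  shows "(cmod (\<Sum>n<N. a n * z^n))^2 \<le> Re (Uf a N z)"
proof (induction N arbitrary: a)
  case 0
  then show ?case by (simp add: Uf_def)
next
  case (Suc N)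
  define g where "g = (\<Sum>n<N. a (Suc n) * z^n)"
  have f: "(\<Sum>n<Suc N. a n * z^n) = a 0 + z * g"
    by (subst sum.lessThan_Suc_shift) (simp add: g_def sum_distrib_left mult_ac)
  have sq: "(cmod w)^2 = Re (w * cnj w)" for w
    by (metis Re_complex_of_real complex_norm_square)
  have "(cmod (a 0 + z * g))^2 = Re (a 0 * cnj (a 0) + a 0 * cnj (z * g) + cnj (a 0) * (z * g)) + (cmod (z * g))^2"
    unfolding sq by (simp add: algebra_simps)
  also have "(cmod (z * g))^2 \<le> (cmod g)^2"
  proof -
    have "cmod (z * g) \<le> cmod g" using assms by (simp add: norm_mult mult_left_le_one_le)
    then show ?thesis by (simp add: power_mono)
  qed
  also have "(cmod g)^2 \<le> Re (Uf (\<lambda>n. a (Suc n)) N z)"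
    using Suc.IH[of "\<lambda>n. a (Suc n)"] by (simp add: g_def)
  finally show ?case unfolding f Uf_Suc[of a N z] by (simp add: g_def)
qed

definition dd :: "nat \<Rightarrow> nat \<Rightarrow> nat" where "dd m n = (if n \<le> m then m - n else n - m)"

lemma dd_sym: "dd m n = dd n m" by (auto simp: dd_def)

lemma geo_le: fixes \<rho> :: real assumes "0 \<le> \<rho>" "\<rho> < 1" shows "(\<Sum>i<K. \<rho>^i) \<le> 1/(1-\<rho>)"
proof -
  have "(\<Sum>i<K. \<rho>^i) = (1 - \<rho>^K)/(1-\<rho>)" using sum_gp_strict[of \<rho> K] assms by auto
  also have "\<dots> \<le> 1/(1-\<rho>)" using assms by (intro divide_right_mono) auto
  finally show ?thesis .
qed

lemma geo_dd:
  fixes \<rho> :: real assumes r: "0 \<le> \<rho>" "\<rho> < 1"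
  shows "(\<Sum>n<N. \<rho> ^ dd m n) \<le> (1+\<rho>)/(1-\<rho>)"
proof -
  let ?A = "{..<N} \<inter> {n. n \<le> m}" and ?B = "{..<N} \<inter> - {n. n \<le> m}"
  have "(\<Sum>n<N. \<rho> ^ dd m n) = (\<Sum>n<N. if n \<le> m then \<rho>^(m-n) else \<rho>^(n-m))"
    by (simp add: dd_def if_distrib)
  also have "\<dots> = (\<Sum>n\<in>?A. \<rho>^(m-n)) + (\<Sum>n\<in>?B. \<rho>^(n-m))"
    by (rule sum.If_cases) simp
  also have "(\<Sum>n\<in>?A. \<rho>^(m-n)) \<le> 1/(1-\<rho>)"
  proof -
    have inj: "inj_on (\<lambda>n. m - n) ?A" by (auto simp: inj_on_def)
    have "(\<Sum>n\<in>?A. \<rho>^(m-n)) = (\<Sum>i\<in>(\<lambda>n. m - n) ` ?A. \<rho>^i)"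
      by (simp add: sum.reindex[OF inj] o_def)
    also have "\<dots> \<le> (\<Sum>i<Suc m. \<rho>^i)"
      by (rule sum_mono2) (use r in auto)
    also have "\<dots> \<le> 1/(1-\<rho>)" by (rule geo_le[OF r])
    finally show ?thesis .
  qed
  also have "(\<Sum>n\<in>?B. \<rho>^(n-m)) \<le> \<rho>/(1-\<rho>)"
  proof -
    have inj: "inj_on (\<lambda>n. n - Suc m) ?B" by (auto simp: inj_on_def)
    have "(\<Sum>n\<in>?B. \<rho>^(n-m)) = (\<Sum>n\<in>?B. \<rho> * \<rho>^(n - Suc m))"
      by (intro sum.cong refl) (auto simp: power_Suc[symmetric] Suc_diff_Suc)
    also have "\<dots> = \<rho> * (\<Sum>i\<in>(\<lambda>n. n - Suc m) ` ?B. \<rho>^i)"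
      by (simp add: sum.reindex[OF inj] o_def sum_distrib_left)
    also have "\<dots> \<le> \<rho> * (\<Sum>i<N. \<rho>^i)"
      by (intro mult_left_mono sum_mono2) (use r in auto)
    also have "\<dots> \<le> \<rho> * (1/(1-\<rho>))" by (intro mult_left_mono geo_le r)
    finally show ?thesis by simp
  qed
  finally show ?thesis using r by (simp add: add_divide_distrib)
qed

lemma Uf_schur:
  fixes a :: "nat \<Rightarrow> complex"
  assumes w: "norm w < 1"
  shows "Re (Uf a N w) \<le> (1 + norm w)/(1 - norm w) * (\<Sum>n<N. (cmod (a n))^2)"
proof -
  let ?\<rho> = "norm w" and ?C = "(1 + norm w)/(1 - norm w)"
  let ?x = "\<lambda>n. cmod (a n)"
  have nK: "cmod (Kk w m n) = ?\<rho> ^ dd m n" for m n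
    by (simp add: Kk_def dd_def norm_power)
  have "Re (Uf a N w) \<le> cmod (Uf a N w)" by (rule complex_Re_le_cmod)
  also have "\<dots> \<le> (\<Sum>m<N. \<Sum>n<N. ?x m * ?x n * ?\<rho> ^ dd m n)"
    unfolding Uf_def
    by (rule order_trans[OF norm_sum sum_mono], rule order_trans[OF norm_sum sum_mono])
       (simp add: norm_mult nK)
  also have "\<dots> \<le> (\<Sum>m<N. \<Sum>n<N. ((?x m)^2/2 + (?x n)^2/2) * ?\<rho> ^ dd m n)"
  proof (intro sum_mono mult_right_mono)
    fix m n
    have "0 \<le> (?x m - ?x n)^2" by simp
    then show "?x m * ?x n \<le> (?x m)^2/2 + (?x n)^2/2" by (simp add: power2_eq_square algebra_simps)
  qed simp
  also have "\<dots> = (\<Sum>m<N. \<Sum>n<N. (?x m)^2/2 * ?\<rho> ^ dd m n) + (\<Sum>m<N. \<Sum>n<N. (?x n)^2/2 * ?\<rho> ^ dd m n)"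
    by (simp add: distrib_right sum.distrib)
  also have "(\<Sum>m<N. \<Sum>n<N. (?x n)^2/2 * ?\<rho> ^ dd m n) = (\<Sum>m<N. \<Sum>n<N. (?x m)^2/2 * ?\<rho> ^ dd m n)"
    by (subst sum.swap) (intro sum.cong refl, subst dd_sym, rule refl)
  also have "(\<Sum>m<N. \<Sum>n<N. (?x m)^2/2 * ?\<rho> ^ dd m n) + (\<Sum>m<N. \<Sum>n<N. (?x m)^2/2 * ?\<rho> ^ dd m n)
      = (\<Sum>m<N. (?x m)^2 * (\<Sum>n<N. ?\<rho> ^ dd m n))"
  proof -
    have e: "(\<Sum>n<N. (?x m)^2/2 * ?\<rho> ^ dd m n) = (?x m)^2/2 * (\<Sum>n<N. ?\<rho> ^ dd m n)" for m
      by (simp add: sum_distrib_left)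
    show ?thesis unfolding e sum.distrib[symmetric] by (intro sum.cong refl) simp
  qed
  also have "\<dots> \<le> (\<Sum>m<N. (?x m)^2 * ?C)"
    by (intro sum_mono mult_left_mono geo_dd) (use w in auto)
  also have "\<dots> = ?C * (\<Sum>n<N. (cmod (a n))^2)"
    by (simp add: sum_distrib_left mult_ac)
  finally show ?thesis .
qed

lemma parseval_real:
  fixes F :: "complex poly" and r :: real
  assumes "degree F < M"
  shows "(\<Sum>j<M. (cmod (poly F (of_real r * rt M j)))^2) = real M * (\<Sum>k<M. (cmod (coeff F k))^2 * r^(2*k))"
proof -
  have "complex_of_real (\<Sum>j<M. (cmod (poly F (of_real r * rt M j)))^2)
      = (\<Sum>j<M. poly F (of_real r * rt M j) * cnj (poly F (of_real r * rt M j)))"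
    by (simp only: of_real_sum complex_norm_square)
  also have "\<dots> = of_nat M * (\<Sum>k<M. coeff F k * cnj (coeff F k) * of_real (r^(2*k)))"
    by (rule parseval_disc[OF assms assms])
  also have "\<dots> = complex_of_real (real M * (\<Sum>k<M. (cmod (coeff F k))^2 * r^(2*k)))"
    by (simp only: of_real_mult of_real_sum complex_norm_square of_real_of_nat_eq)
  finally show ?thesis by (simp only: of_real_eq_iff)
qed

lemma mean_bound:
  fixes F :: "complex poly" and r :: real
  assumes "degree F < M" and B: "\<And>j. j < M \<Longrightarrow> cmod (poly F (of_real r * rt M j)) \<le> B"
  shows "(\<Sum>k<M. (cmod (coeff F k))^2 * r^(2*k)) \<le> B^2"
proof -
  have M0: "real M > 0" using assms(1) by simp
  have "real M * (\<Sum>k<M. (cmod (coeff F k))^2 * r^(2*k)) = (\<Sum>j<M. (cmod (poly F (of_real r * rt M j)))^2)"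
    by (rule parseval_real[OF assms(1), symmetric])
  also have "\<dots> \<le> (\<Sum>j<M. B^2)"
    by (intro sum_mono power_mono B) auto
  also have "\<dots> = real M * B^2" by simp
  finally show ?thesis using M0 by simp
qed

lemma mean_poly:
  fixes G :: "complex poly" and r :: real
  assumes "degree G < M"
  shows "(\<Sum>j<M. poly G (of_real r * rt M j)) = of_nat M * coeff G 0"
proof -
  have "(\<Sum>j<M. poly G (of_real r * rt M j)) = (\<Sum>j<M. poly G (of_real r * rt M j) * cnj (poly 1 (of_real r * rt M j)))"
    by simp
  also have "\<dots> = of_nat M * (\<Sum>k<M. coeff G k * cnj (coeff 1 k) * of_real (r^(2*k)))"
    by (rule parseval_disc) (use assms in auto)
  also have "(\<Sum>k<M. coeff G k * cnj (coeff 1 k) * of_real (r^(2*k))) = (\<Sum>k<M. if k = 0 then coeff G k else 0)"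
    by (intro sum.cong refl) (auto simp: coeff_1)
  also have "\<dots> = coeff G 0" using assms by (simp add: sum.delta)
  finally show ?thesis .
qed

lemma sum_Uf_poly:
  fixes p :: "complex poly" and a :: "nat \<Rightarrow> complex" and r :: real
  assumes "N * degree p < M"
  shows "(\<Sum>j<M. Uf a N (poly p (of_real r * rt M j))) = of_nat M * Uf a N (coeff p 0)"
proof -
  have K: "(\<Sum>j<M. Kk (poly p (of_real r * rt M j)) m n) = of_nat M * Kk (coeff p 0) m n"
    if "m < N" "n < N" for m n
  proof (cases "n \<le> m")
    case True
    have dg: "degree (p ^ (m - n)) < M"
      by (rule le_less_trans[OF degree_power_le], rule le_less_trans[OF _ assms])
         (use that in \<open>auto intro: mult_right_mono\<close>)
    have "(\<Sum>j<M. Kk (poly p (of_real r * rt M j)) m n) = (\<Sum>j<M. poly (p ^ (m - n)) (of_real r * rt M j))"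
      using True by (simp add: Kk_def poly_power)
    also have "\<dots> = of_nat M * coeff (p ^ (m - n)) 0" by (rule mean_poly[OF dg])
    finally show ?thesis using True by (simp add: Kk_def coeff_0_power)
  next
    case False
    have dg: "degree (p ^ (n - m)) < M"
      by (rule le_less_trans[OF degree_power_le], rule le_less_trans[OF _ assms])
         (use that in \<open>auto intro: mult_right_mono\<close>)
    have "(\<Sum>j<M. Kk (poly p (of_real r * rt M j)) m n) = cnj (\<Sum>j<M. poly (p ^ (n - m)) (of_real r * rt M j))"
      using False by (simp add: Kk_def poly_power cnj_sum)
    also have "\<dots> = cnj (of_nat M * coeff (p ^ (n - m)) 0)" by (simp only: mean_poly[OF dg])
    finally show ?thesis using False by (simp add: Kk_def coeff_0_power)
  qed
  have "(\<Sum>j<M. Uf a N (poly p (of_real r * rt M j)))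
      = (\<Sum>m<N. \<Sum>n<N. a m * cnj (a n) * (\<Sum>j<M. Kk (poly p (of_real r * rt M j)) m n))"
    unfolding Uf_def sum_distrib_left
    by (subst sum.swap, rule sum.cong[OF refl], subst sum.swap, rule refl)
  also have "\<dots> = (\<Sum>m<N. \<Sum>n<N. a m * cnj (a n) * (of_nat M * Kk (coeff p 0) m n))"
    by (intro sum.cong refl) (simp add: K)
  also have "\<dots> = of_nat M * Uf a N (coeff p 0)"
    unfolding Uf_def sum_distrib_left by (intro sum.cong refl) (simp add: mult_ac)
  finally show ?thesis .
qed

lemma main_finite:
  fixes p :: "complex poly" and a :: "nat \<Rightarrow> complex" and r :: real
  assumes hp: "\<And>z. cmod z = r \<Longrightarrow> cmod (poly p z) \<le> 1"
    and r: "0 \<le> r" and w: "cmod (coeff p 0) < 1"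
  shows "(\<Sum>k<Q. (cmod (coeff (\<Sum>n<N. smult (a n) (p^n)) k))^2 * r^(2*k))
         \<le> (1 + cmod (coeff p 0))/(1 - cmod (coeff p 0)) * (\<Sum>n<N. (cmod (a n))^2)"
proof -
  define M where "M = Q + N * degree p + 1"
  define F where "F = (\<Sum>n<N. smult (a n) (p^n))"
  have "M > 0" by (simp add: M_def)
  then have M0: "real M > 0" by simp
  have dF: "degree F < M"
    unfolding F_def
  proof (rule degree_sum_less)
    fix n assume "n \<in> {..<N}"
    then have "degree p * n \<le> degree p * N" by (intro mult_left_mono) auto
    then have "degree (smult (a n) (p ^ n)) \<le> degree p * N"
      using degree_power_le[of p n] degree_smult_le[of "a n" "p^n"] by linarith
    then show "degree (smult (a n) (p ^ n)) < M"
      by (simp add: M_def mult.commute)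
  qed (simp add: M_def)
  have zj: "cmod (of_real r * rt M j) = r" for j using r by (simp add: norm_mult)
  have "(\<Sum>k<Q. (cmod (coeff F k))^2 * r^(2*k)) \<le> (\<Sum>k<M. (cmod (coeff F k))^2 * r^(2*k))"
    by (rule sum_mono2) (use r in \<open>auto simp: M_def\<close>)
  also have "\<dots> = (\<Sum>j<M. (cmod (poly F (of_real r * rt M j)))^2) / real M"
    using parseval_real[OF dF, of r] M0 by simp
  also have "(\<Sum>j<M. (cmod (poly F (of_real r * rt M j)))^2) \<le> (\<Sum>j<M. Re (Uf a N (poly p (of_real r * rt M j))))"
  proof (rule sum_mono)
    fix j
    have "poly F (of_real r * rt M j) = (\<Sum>n<N. a n * (poly p (of_real r * rt M j))^n)"
      by (simp add: F_def poly_sum poly_power)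
    then show "(cmod (poly F (of_real r * rt M j)))^2 \<le> Re (Uf a N (poly p (of_real r * rt M j)))"
      using Uf_bound[OF hp[OF zj]] by simp
  qed
  also have "(\<Sum>j<M. Re (Uf a N (poly p (of_real r * rt M j)))) = real M * Re (Uf a N (coeff p 0))"
  proof -
    have "(\<Sum>j<M. Re (Uf a N (poly p (of_real r * rt M j)))) = Re (\<Sum>j<M. Uf a N (poly p (of_real r * rt M j)))"
      by (simp add: Re_sum)
    also have "\<dots> = Re (of_nat M * Uf a N (coeff p 0))"
      by (subst sum_Uf_poly) (auto simp: M_def)
    finally show ?thesis by simp
  qed
  also have "real M * Re (Uf a N (coeff p 0)) / real M = Re (Uf a N (coeff p 0))" using M0 by simp
  also have "\<dots> \<le> (1 + cmod (coeff p 0))/(1 - cmod (coeff p 0)) * (\<Sum>n<N. (cmod (a n))^2)"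
    by (rule Uf_schur[OF w])
  finally show ?thesis
    using M0 by (simp add: F_def divide_right_mono)
qed

fun cspow :: "(nat \<Rightarrow> complex) \<Rightarrow> nat \<Rightarrow> nat \<Rightarrow> complex" where
  "cspow g 0 = (\<lambda>k. if k = 0 then 1 else 0)"
| "cspow g (Suc m) = (\<lambda>n. \<Sum>k\<le>n. g k * cspow g m (n - k))"

definition ptr :: "(nat \<Rightarrow> complex) \<Rightarrow> nat \<Rightarrow> complex poly" where
  "ptr g L = (\<Sum>i\<le>L. monom (g i) i)"

lemma coeff_ptr: "coeff (ptr g L) i = (if i \<le> L then g i else 0)"
  by (simp add: ptr_def coeff_sum coeff_monom)

lemma poly_ptr: "poly (ptr g L) z = (\<Sum>i\<le>L. g i * z^i)"
  by (simp add: ptr_def poly_sum poly_monom)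

lemma coeff_ptr_pow: "k \<le> L \<Longrightarrow> coeff ((ptr g L)^n) k = cspow g n k"
proof (induction n arbitrary: k)
  case 0
  then show ?case by (simp add: coeff_1)
next
  case (Suc n)
  have "coeff ((ptr g L)^Suc n) k = (\<Sum>i\<le>k. coeff (ptr g L) i * coeff ((ptr g L)^n) (k - i))"
    by (simp add: coeff_mult)
  also have "\<dots> = (\<Sum>i\<le>k. g i * cspow g n (k - i))"
    by (intro sum.cong refl) (use Suc in \<open>auto simp: coeff_ptr\<close>)
  finally show ?case by simp
qed

locale selfmap =
  fixes g :: "nat \<Rightarrow> complex"
  assumes A1: "\<And>z. cmod z < 1 \<Longrightarrow> summable (\<lambda>n. g n * z^n)"
    and A2: "\<And>z. cmod z < 1 \<Longrightarrow> cmod (\<Sum>n. g n * z^n) < 1"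
begin

lemma g0: "cmod (g 0) < 1"
  using A2[of 0] by (simp add: powser_zero)

lemma trunc_bound:
  assumes r: "0 < r" "r < 1"
  shows "\<exists>\<rho>. 0 \<le> \<rho> \<and> \<rho> < 1 \<and> (\<exists>L0. \<forall>L\<ge>L0. \<forall>z. cmod z = r \<longrightarrow> cmod (poly (ptr g L) z) \<le> \<rho>)"
proof -
  define R where "R = (1 + r)/2"
  have R: "r < R" "R < 1" using r by (auto simp: R_def)
  have sR: "summable (\<lambda>n. g n * (of_real R)^n)" using A1[of "of_real R"] R r by simp
  let ?\<phi> = "\<lambda>z. \<Sum>n. g n * z^n"
  have cont: "continuous_on (sphere 0 r) (\<lambda>z. cmod (?\<phi> z))"
  proof (intro continuous_on_norm continuous_at_imp_continuous_on ballI)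
    fix z :: complex assume "z \<in> sphere 0 r"
    then have "cmod z < cmod (complex_of_real R)" using R r by simp
    then show "isCont ?\<phi> z" by (rule isCont_powser[OF sR])
  qed
  have mem: "complex_of_real r \<in> sphere 0 r" using r by simp
  then have ne: "sphere (0::complex) r \<noteq> {}" by auto
  obtain x0 where x0: "x0 \<in> sphere 0 r" and mx: "\<And>y. y \<in> sphere 0 r \<Longrightarrow> cmod (?\<phi> y) \<le> cmod (?\<phi> x0)"
    using continuous_attains_sup[OF compact_sphere ne cont] by blast
  define s where "s = cmod (?\<phi> x0)"
  have s1: "s < 1" unfolding s_def using x0 r by (intro A2) simp
  have s0: "0 \<le> s" by (simp add: s_def)
  define \<epsilon> where "\<epsilon> = (1 - s)/2"
  have e0: "\<epsilon> > 0" using s1 by (simp add: \<epsilon>_def)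
  define h where "h n = norm (g n * (of_real r)^n)" for n
  have sh: "summable h" unfolding h_def
    by (rule powser_insidea[OF sR]) (use R r in simp)
  obtain N0 where N0: "\<And>n. n \<ge> N0 \<Longrightarrow> norm (\<Sum>i. h (i + n)) < \<epsilon>"
    using suminf_exist_split[OF e0 sh] by blast
  show ?thesis
  proof (intro exI conjI)
    show "0 \<le> (1 + s)/2" using s0 by simp
    show "(1 + s)/2 < 1" using s1 by simp
    show "\<forall>L\<ge>N0. \<forall>z. cmod z = r \<longrightarrow> cmod (poly (ptr g L) z) \<le> (1 + s)/2"
    proof (intro allI impI)
      fix L z assume L: "L \<ge> N0" and z: "cmod z = r"
      have sz: "summable (\<lambda>n. g n * z^n)" using A1 z r by simp
      have split: "?\<phi> z = (\<Sum>i. g (i + Suc L) * z^(i + Suc L)) + poly (ptr g L) z"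
        using suminf_split_initial_segment[OF sz, of "Suc L"]
        by (simp add: poly_ptr lessThan_Suc_atMost)
      have hz: "norm (g (i + Suc L) * z^(i + Suc L)) = h (i + Suc L)" for i
        using r by (simp add: h_def norm_mult norm_power z)
      have sh': "summable (\<lambda>i. h (i + Suc L))" using sh by (simp only: summable_iff_shift)
      have "cmod (\<Sum>i. g (i + Suc L) * z^(i + Suc L)) \<le> (\<Sum>i. norm (g (i + Suc L) * z^(i + Suc L)))"
        by (rule summable_norm) (simp only: hz sh')
      also have "\<dots> = (\<Sum>i. h (i + Suc L))" by (simp only: hz)
      also have "\<dots> \<le> norm (\<Sum>i. h (i + Suc L))" by simp
      also have "\<dots> < \<epsilon>" using N0[of "Suc L"] L by simp
      finally have tail: "cmod (\<Sum>i. g (i + Suc L) * z^(i + Suc L)) < \<epsilon>" .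
      have "cmod (?\<phi> z) \<le> s" unfolding s_def by (rule mx) (simp add: z)
      then have "cmod (poly (ptr g L) z) \<le> s + \<epsilon>"
        using tail split norm_triangle_ineq4[of "?\<phi> z" "\<Sum>i. g (i + Suc L) * z^(i + Suc L)"]
        by (smt (verit) add_diff_cancel_left')
      then show "cmod (poly (ptr g L) z) \<le> (1 + s)/2" by (simp add: \<epsilon>_def field_simps)
    qed
  qed
qed

end

context selfmap begin

lemma coef_decay: "\<exists>\<rho>. 0 \<le> \<rho> \<and> \<rho> < 1 \<and> (\<forall>n. (cmod (cspow g n k))^2 \<le> 4^k * (\<rho>^2)^n)"
proof -
  obtain \<rho> L0 where \<rho>: "0 \<le> \<rho>" "\<rho> < 1" and L0: "\<And>L z. L \<ge> L0 \<Longrightarrow> cmod z = 1/2 \<Longrightarrow> cmod (poly (ptr g L) z) \<le> \<rho>"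
    using trunc_bound[of "1/2"] by auto
  define L where "L = max L0 k"
  define p where "p = ptr g L"
  have "(cmod (cspow g n k))^2 \<le> 4^k * (\<rho>^2)^n" for n
  proof -
    define M where "M = n * degree p + k + 1"
    have dg: "degree (p^n) < M"
      using degree_power_le[of p n] by (simp add: M_def mult.commute)
    have B: "cmod (poly (p^n) (of_real (1/2) * rt M j)) \<le> \<rho>^n" for j
    proof -
      have "cmod (of_real (1/2) * rt M j) = 1/2" by (simp add: norm_mult)
      then have "cmod (poly p (of_real (1/2) * rt M j)) \<le> \<rho>" unfolding p_def by (intro L0) (auto simp: L_def)
      then show ?thesis by (simp add: poly_power norm_power power_mono)
    qed
    have "(cmod (coeff (p^n) k))^2 * (1/2)^(2*k) \<le> (\<Sum>k'<M. (cmod (coeff (p^n) k'))^2 * (1/2)^(2*k'))"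
      by (rule member_le_sum[of k "{..<M}" "\<lambda>k'. (cmod (coeff (p^n) k'))^2 * (1/2)^(2*k')"]) (auto simp: M_def)
    also have "\<dots> \<le> (\<rho>^n)^2" by (rule mean_bound[OF dg B])
    finally have le0: "(cmod (coeff (p^n) k))^2 * (1/2)^(2*k) \<le> (\<rho>^n)^2" .
    have c: "coeff (p^n) k = cspow g n k" unfolding p_def by (rule coeff_ptr_pow) (simp add: L_def)
    have h: "(1/2::real)^(2*k) = (1/4)^k" by (simp add: power_mult power2_eq_square)
    have h2: "(\<rho>^n)^2 = (\<rho>^2)^n" by (simp flip: power_mult add: mult.commute)
    have le: "(cmod (cspow g n k))^2 * (1/4)^k \<le> (\<rho>^2)^n" using le0 unfolding c h h2 .
    have "(cmod (cspow g n k))^2 = (cmod (cspow g n k))^2 * (1/4)^k * 4^k"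
      by (simp flip: power_mult_distrib)
    also have "\<dots> \<le> (\<rho>^2)^n * 4^k" by (intro mult_right_mono le) simp
    finally show ?thesis by (simp add: mult.commute)
  qed
  then show ?thesis using \<rho> by blast
qed

lemma summ:
  assumes a: "summable (\<lambda>n. (cmod (\<alpha> n))^2)"
  shows "summable (\<lambda>n. cspow g n k * \<alpha> n)"
proof -
  obtain \<rho> where \<rho>: "0 \<le> \<rho>" "\<rho> < 1" and d: "\<And>n. (cmod (cspow g n k))^2 \<le> 4^k * (\<rho>^2)^n"
    using coef_decay[of k] by blast
  have "\<rho>^2 < 1^2" by (rule power_strict_mono) (use \<rho> in auto)
  then have sg: "summable (\<lambda>n. (\<rho>^2)^n)" using \<rho> by (intro summable_geometric) simp
  show ?thesis
  proof (rule summable_comparison_test'[where N=0])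
    show "summable (\<lambda>n. (4^k * (\<rho>^2)^n + (cmod (\<alpha> n))^2)/2)"
      by (intro summable_divide summable_add summable_mult sg a)
    fix n
    have "norm (cspow g n k * \<alpha> n) = cmod (cspow g n k) * cmod (\<alpha> n)" by (simp add: norm_mult)
    also have "\<dots> \<le> ((cmod (cspow g n k))^2 + (cmod (\<alpha> n))^2)/2"
      using sum_squares_bound[of "cmod (cspow g n k)" "cmod (\<alpha> n)"] by (simp add: field_simps)
    also have "\<dots> \<le> (4^k * (\<rho>^2)^n + (cmod (\<alpha> n))^2)/2" using d[of n] by simp
    finally show "norm (cspow g n k * \<alpha> n) \<le> (4^k * (\<rho>^2)^n + (cmod (\<alpha> n))^2)/2" .
  qed
qed

end

context selfmap begin

lemma C_nonneg: "0 \<le> (1 + cmod (g 0))/(1 - cmod (g 0))"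
  using g0 by simp

lemma fin_bound:
  assumes r: "0 < r" "r < 1"
  shows "(\<Sum>k<Q. (cmod (\<Sum>n<N. cspow g n k * \<alpha> n))^2 * r^(2*k))
         \<le> (1 + cmod (g 0))/(1 - cmod (g 0)) * (\<Sum>n<N. (cmod (\<alpha> n))^2)"
proof -
  obtain \<rho> L0 where \<rho>: "0 \<le> \<rho>" "\<rho> < 1" and L0: "\<And>L z. L \<ge> L0 \<Longrightarrow> cmod z = r \<Longrightarrow> cmod (poly (ptr g L) z) \<le> \<rho>"
    using trunc_bound[OF r] by auto
  define L where "L = max L0 Q"
  define p where "p = ptr g L"
  have hp: "cmod (poly p z) \<le> 1" if "cmod z = r" for z
    using L0[of L z] that \<rho> by (simp add: p_def L_def)
  have c0: "coeff p 0 = g 0" by (simp add: p_def coeff_ptr)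
  have "(\<Sum>k<Q. (cmod (coeff (\<Sum>n<N. smult (\<alpha> n) (p^n)) k))^2 * r^(2*k))
         \<le> (1 + cmod (coeff p 0))/(1 - cmod (coeff p 0)) * (\<Sum>n<N. (cmod (\<alpha> n))^2)"
    by (rule main_finite[OF hp]) (use r g0 c0 in auto)
  moreover have "coeff (\<Sum>n<N. smult (\<alpha> n) (p^n)) k = (\<Sum>n<N. cspow g n k * \<alpha> n)" if "k < Q" for k
    using that by (simp add: coeff_sum p_def coeff_ptr_pow L_def mult.commute)
  ultimately show ?thesis using c0 by simp
qed

lemma fin_bound1:
  "(\<Sum>k<Q. (cmod (\<Sum>n<N. cspow g n k * \<alpha> n))^2)
     \<le> (1 + cmod (g 0))/(1 - cmod (g 0)) * (\<Sum>n<N. (cmod (\<alpha> n))^2)"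
proof -
  let ?X = "\<lambda>k. (cmod (\<Sum>n<N. cspow g n k * \<alpha> n))^2"
  have lim: "((\<lambda>r. \<Sum>k<Q. ?X k * r^(2*k)) \<longlongrightarrow> (\<Sum>k<Q. ?X k * 1^(2*k))) (at_left 1)"
    by (intro tendsto_intros)
  have ev: "\<forall>\<^sub>F r in at_left 1. (\<Sum>k<Q. ?X k * r^(2*k)) \<le> (1 + cmod (g 0))/(1 - cmod (g 0)) * (\<Sum>n<N. (cmod (\<alpha> n))^2)"
  proof -
    have e: "\<forall>\<^sub>F r in at_left (1::real). r \<in> {0<..<1}" by (rule eventually_at_left_real) simp
    show ?thesis using e by eventually_elim (use fin_bound in simp)
  qed
  have "(\<Sum>k<Q. ?X k * 1^(2*k)) \<le> (1 + cmod (g 0))/(1 - cmod (g 0)) * (\<Sum>n<N. (cmod (\<alpha> n))^2)"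
    by (rule tendsto_le[OF trivial_limit_at_left_real tendsto_const lim ev])
  then show ?thesis by simp
qed

theorem core:
  assumes a: "summable (\<lambda>n. (cmod (\<alpha> n))^2)"
  shows "(\<forall>k. summable (\<lambda>n. cspow g n k * \<alpha> n))
       \<and> summable (\<lambda>k. (cmod (\<Sum>n. cspow g n k * \<alpha> n))^2)
       \<and> (\<Sum>k. (cmod (\<Sum>n. cspow g n k * \<alpha> n))^2) \<le> (1 + cmod (g 0))/(1 - cmod (g 0)) * (\<Sum>n. (cmod (\<alpha> n))^2)"
proof -
  let ?C = "(1 + cmod (g 0))/(1 - cmod (g 0))"
  let ?b = "\<lambda>k. \<Sum>n. cspow g n k * \<alpha> n"
  have s: "\<And>k. summable (\<lambda>n. cspow g n k * \<alpha> n)" by (rule summ[OF a])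
  have bQ: "(\<Sum>k<Q. (cmod (?b k))^2) \<le> ?C * (\<Sum>n. (cmod (\<alpha> n))^2)" for Q
  proof (rule LIMSEQ_le_const2)
    show "(\<lambda>N. \<Sum>k<Q. (cmod (\<Sum>n<N. cspow g n k * \<alpha> n))^2) \<longlonglongrightarrow> (\<Sum>k<Q. (cmod (?b k))^2)"
      by (intro tendsto_sum tendsto_power tendsto_norm summable_LIMSEQ s)
    show "\<exists>N0. \<forall>N\<ge>N0. (\<Sum>k<Q. (cmod (\<Sum>n<N. cspow g n k * \<alpha> n))^2) \<le> ?C * (\<Sum>n. (cmod (\<alpha> n))^2)"
    proof (intro exI allI impI)
      fix N :: nat
      have "(\<Sum>k<Q. (cmod (\<Sum>n<N. cspow g n k * \<alpha> n))^2) \<le> ?C * (\<Sum>n<N. (cmod (\<alpha> n))^2)"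
        by (rule fin_bound1)
      also have "\<dots> \<le> ?C * (\<Sum>n. (cmod (\<alpha> n))^2)"
        by (intro mult_left_mono C_nonneg sum_le_suminf a) auto
      finally show "(\<Sum>k<Q. (cmod (\<Sum>n<N. cspow g n k * \<alpha> n))^2) \<le> ?C * (\<Sum>n. (cmod (\<alpha> n))^2)" .
    qed
  qed
  have sb: "summable (\<lambda>k. (cmod (?b k))^2)"
    by (rule summableI_nonneg_bounded[OF _ bQ]) simp
  have "(\<Sum>k. (cmod (?b k))^2) \<le> ?C * (\<Sum>n. (cmod (\<alpha> n))^2)"
    by (rule suminf_le_const[OF sb bQ])
  then show ?thesis using s sb by blast
qed

end

definition qconj :: "quat \<Rightarrow> quat" where "qconj p = (cnj (fst p), - snd p)"
definition i0 :: quat where "i0 = (\<i>, 0)"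

lemma qmul_simp[simp]: "qmul (a, b) (c, d) = (a * c - b * cnj d, a * d + b * cnj c)"
  by (simp add: qmul_def)

lemma qmul_assoc: "qmul (qmul p q) s = qmul p (qmul q s)"
  by (cases p, cases q, cases s) (simp add: algebra_simps)

lemma qmul_add_left: "qmul (p + q) s = qmul p s + qmul q s"
  by (cases p, cases q, cases s) (simp add: algebra_simps)

lemma qmul_add_right: "qmul s (p + q) = qmul s p + qmul s q"
  by (cases p, cases q, cases s) (simp add: algebra_simps)

lemma qmul_zero_left[simp]: "qmul 0 p = 0" and qmul_zero_right[simp]: "qmul p 0 = 0"
  by (cases p, simp add: zero_prod_def)+

lemma qmul_scaleR_left: "qmul (r *\<^sub>R p) q = r *\<^sub>R qmul p q"
  by (cases p, cases q) (simp add: scaleR_conv_of_real algebra_simps)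

lemma qmul_scaleR_right: "qmul q (r *\<^sub>R p) = r *\<^sub>R qmul q p"
  by (cases p, cases q) (simp add: scaleR_conv_of_real algebra_simps)

lemma qmul_minus_left: "qmul (- p) q = - qmul p q"
  by (cases p, cases q) (simp add: algebra_simps)

lemma qmul_minus_right: "qmul q (- p) = - qmul q p"
  by (cases p, cases q) (simp add: algebra_simps)

lemma qmul_diff_left: "qmul (p - q) s = qmul p s - qmul q s"
  by (cases p, cases q, cases s) (simp add: algebra_simps)

lemma qmul_diff_right: "qmul s (p - q) = qmul s p - qmul s q"
  by (cases p, cases q, cases s) (simp add: algebra_simps)

lemma qmul_qone_left[simp]: "qmul qone p = p" and qmul_qone_right[simp]: "qmul p qone = p"
  by (cases p, simp add: qone_def)+

lemma norm_sq_pair: "(norm (a::complex, b::complex))^2 = (cmod a)^2 + (cmod b)^2"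
  by (simp add: norm_Pair)

lemma norm_qmul: "norm (qmul p q) = norm p * norm q"
proof -
  obtain a b c d where pq: "p = (a, b)" "q = (c, d)" by (cases p, cases q) auto
  have "complex_of_real ((cmod (a * c - b * cnj d))^2 + (cmod (a * d + b * cnj c))^2)
      = complex_of_real (((cmod a)^2 + (cmod b)^2) * ((cmod c)^2 + (cmod d)^2))"
    unfolding of_real_add of_real_mult complex_norm_square
    unfolding complex_cnj_diff complex_cnj_mult complex_cnj_add complex_cnj_cnj by algebra
  then have "(norm (qmul p q))^2 = (norm p * norm q)^2"
    unfolding pq qmul_simp power_mult_distrib norm_sq_pair by (simp only: of_real_eq_iff)
  then show ?thesis by (simp add: power2_eq_iff_nonneg)
qed

lemma bl_qmul_right: "bounded_linear (\<lambda>x. qmul p x)"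
  by (rule bounded_linear_intro[where K="norm p"]) (auto simp: qmul_add_right qmul_scaleR_right norm_qmul)

lemma bl_qmul_left: "bounded_linear (\<lambda>x. qmul x p)"
  by (rule bounded_linear_intro[where K="norm p"]) (auto simp: qmul_add_left qmul_scaleR_left norm_qmul mult.commute)

lemma qmul_sum_left: "qmul (sum f A) p = (\<Sum>i\<in>A. qmul (f i) p)"
  by (induct A rule: infinite_finite_induct) (simp_all add: qmul_add_left)

lemma qmul_sum_right: "qmul p (sum f A) = (\<Sum>i\<in>A. qmul p (f i))"
  by (induct A rule: infinite_finite_induct) (simp_all add: qmul_add_right)

lemma qmul_conj_right: "qmul p (qconj p) = qreal ((norm p)^2)"
  by (cases p) (simp add: qconj_def qreal_def norm_sq_pair of_real_add complex_norm_square mult.commute del: of_real_power)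

lemma qmul_conj_left: "qmul (qconj p) p = qreal ((norm p)^2)"
  by (cases p) (simp add: qconj_def qreal_def norm_sq_pair of_real_add complex_norm_square mult.commute del: of_real_power)

lemma norm_qconj[simp]: "norm (qconj p) = norm p"
  by (cases p) (simp add: qconj_def norm_Pair)

lemma qreal_eq: "qreal r = r *\<^sub>R qone"
  by (simp add: qreal_def qone_def scaleR_conv_of_real)

lemma qreal_1: "qreal 1 = qone" by (simp add: qreal_def qone_def)

lemma qmul_i0_i0: "qmul i0 i0 = - qone"
  by (simp add: i0_def qone_def)

lemma qmul_qreal_left: "qmul (qreal r) p = r *\<^sub>R p"
  by (simp add: qreal_eq qmul_scaleR_left)

lemma qmul_qreal_right: "qmul p (qreal r) = r *\<^sub>R p"
  by (simp add: qreal_eq qmul_scaleR_right)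

lemma unit_exists:
  assumes I: "qmul I I = - qone"
  shows "\<exists>u. norm u = 1 \<and> qmul u I = qmul i0 u"
proof -
  define q where "q = qone - qmul i0 I"
  have qI: "qmul q I = I + i0"
  proof -
    have "qmul q I = qmul qone I - qmul (qmul i0 I) I" by (simp only: q_def qmul_diff_left)
    also have "\<dots> = I - qmul i0 (qmul I I)" by (simp only: qmul_assoc qmul_qone_left)
    also have "\<dots> = I + i0" by (simp add: I qmul_minus_right)
    finally show ?thesis .
  qed
  have iq: "qmul i0 q = i0 + I"
  proof -
    have "qmul i0 q = qmul i0 qone - qmul i0 (qmul i0 I)" by (simp only: q_def qmul_diff_right)
    also have "\<dots> = i0 - qmul (qmul i0 i0) I" by (simp only: qmul_assoc qmul_qone_right)
    also have "\<dots> = i0 + I" by (simp add: qmul_i0_i0 qmul_minus_left)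
    finally show ?thesis .
  qed
  show ?thesis
  proof (cases "q = 0")
    case False
    define u where "u = (1 / norm q) *\<^sub>R q"
    have "norm u = 1" using False by (simp add: u_def)
    moreover have "qmul u I = qmul i0 u"
      unfolding u_def qmul_scaleR_left qmul_scaleR_right qI iq by (simp add: add.commute)
    ultimately show ?thesis by blast
  next
    case True
    then have "qmul i0 I = qone" by (simp add: q_def)
    then have "qmul (qmul i0 i0) I = i0" by (simp add: qmul_assoc)
    then have "- I = i0" by (simp add: qmul_i0_i0 qmul_minus_left)
    then have "I = - i0" by (metis minus_minus)
    then show ?thesis
      by (intro exI[of _ "(0,1)"]) (simp add: i0_def)
  qed
qed

lemma qpow_pair: "qpow (z, 0) n = (z^n, 0)"
  by (induct n) (simp_all add: qone_def)

lemma qpow_qreal: "qpow (qreal x) n = qreal (x^n)"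
  by (simp add: qreal_def qpow_pair)

lemma sum_pair: "(\<Sum>n\<in>A. (f n, g n)) = (sum f A, sum g A)"
  by (simp add: prod_eq_iff fst_sum snd_sum)

lemma sums_pair:
  fixes f g :: "nat \<Rightarrow> complex"
  assumes "summable f" "summable g"
  shows "summable (\<lambda>n. (f n, g n)) \<and> (\<Sum>n. (f n, g n)) = (\<Sum>n. f n, \<Sum>n. g n)"
proof -
  have "(\<lambda>n. (f n, g n)) sums (\<Sum>n. f n, \<Sum>n. g n)"
    unfolding sums_def sum_pair
    by (intro tendsto_Pair summable_LIMSEQ assms)
  then show ?thesis by (simp add: sums_iff)
qed

lemma summable_fst: "summable (f :: nat \<Rightarrow> quat) \<Longrightarrow> summable (\<lambda>n. fst (f n))"
  by (rule bounded_linear.summable[OF bounded_linear_fst])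
lemma summable_snd: "summable (f :: nat \<Rightarrow> quat) \<Longrightarrow> summable (\<lambda>n. snd (f n))"
  by (rule bounded_linear.summable[OF bounded_linear_snd])
lemma suminf_fst: "summable (f :: nat \<Rightarrow> quat) \<Longrightarrow> fst (\<Sum>n. f n) = (\<Sum>n. fst (f n))"
  by (rule bounded_linear.suminf[OF bounded_linear_fst])
lemma suminf_snd: "summable (f :: nat \<Rightarrow> quat) \<Longrightarrow> snd (\<Sum>n. f n) = (\<Sum>n. snd (f n))"
  by (rule bounded_linear.suminf[OF bounded_linear_snd])

lemma powser_real_zero:
  fixes \<beta> :: "nat \<Rightarrow> complex"
  assumes S: "\<And>x::real. \<bar>x\<bar> < 1 \<Longrightarrow> summable (\<lambda>n. \<beta> n * of_real x ^ n)"
    and Z: "\<And>x::real. \<bar>x\<bar> < 1 \<Longrightarrow> (\<Sum>n. \<beta> n * of_real x ^ n) = 0"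
  shows "\<beta> n = 0"
proof (induction n rule: less_induct)
  case (less n)
  define h where "h z = (\<Sum>j. \<beta> (j + n) * z^j)" for z :: complex
  have sh: "summable (\<lambda>j. \<beta> (j + n) * of_real x ^ j)" if x: "\<bar>x\<bar> < 1" "x \<noteq> 0" for x :: real
  proof -
    have "summable (\<lambda>j. \<beta> (j + n) * of_real x ^ (j + n))"
      using S[OF x(1)] by (simp only: summable_iff_shift[where f="\<lambda>j. \<beta> j * of_real x ^ j"])
    then have "summable (\<lambda>j. (\<beta> (j + n) * of_real x ^ (j + n)) * (1 / of_real x ^ n))"
      by (rule summable_mult2)
    then show ?thesis using x by (simp add: power_add)
  qed
  have hz: "h (of_real x) = 0" if x: "\<bar>x\<bar> < 1" "x \<noteq> 0" for x :: real
  proof -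
    have s: "summable (\<lambda>k. \<beta> k * of_real x ^ k)" by (rule S[OF x(1)])
    have "0 = (\<Sum>k. \<beta> k * of_real x ^ k)" using Z[OF x(1)] by simp
    also have "\<dots> = (\<Sum>j. \<beta> (j + n) * of_real x ^ (j + n)) + (\<Sum>k<n. \<beta> k * of_real x ^ k)"
      by (rule suminf_split_initial_segment[OF s])
    also have "(\<Sum>k<n. \<beta> k * of_real x ^ k) = 0" using less by simp
    also have "(\<Sum>j. \<beta> (j + n) * of_real x ^ (j + n)) = of_real x ^ n * h (of_real x)"
      unfolding h_def by (subst suminf_mult[OF sh[OF x], symmetric]) (simp add: power_add mult_ac)
    finally show ?thesis using x by simp
  qed
  have s2: "summable (\<lambda>j. \<beta> (j + n) * of_real (1/2) ^ j)" by (rule sh) auto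
  have cont: "isCont h 0" unfolding h_def
    by (rule isCont_powser[OF s2]) simp
  have lim1: "((\<lambda>x::real. h (of_real x)) \<longlongrightarrow> h 0) (at 0)"
    by (rule isCont_tendsto_compose[OF cont]) (auto intro!: tendsto_eq_intros)
  have ev: "\<forall>\<^sub>F x in at (0::real). 0 = h (of_real x)"
    unfolding eventually_at by (intro exI[of _ 1]) (auto simp: dist_real_def hz)
  have lim2: "((\<lambda>x::real. h (of_real x)) \<longlongrightarrow> 0) (at 0)"
    by (rule Lim_transform_eventually[OF tendsto_const ev])
  have "h 0 = 0" by (rule tendsto_unique[OF at_neq_bot lim1 lim2])
  then show ?case by (simp add: h_def powser_zero)
qed

lemma assemble:
  fixes b1 b2 \<alpha> \<beta> :: "nat \<Rightarrow> complex" and K :: real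
  assumes s1: "summable (\<lambda>k. (cmod (b1 k))^2)" and s2: "summable (\<lambda>k. (cmod (b2 k))^2)"
    and l1: "(\<Sum>k. (cmod (b1 k))^2) \<le> K * (\<Sum>n. (cmod (\<alpha> n))^2)"
    and l2: "(\<Sum>k. (cmod (b2 k))^2) \<le> K * (\<Sum>n. (cmod (\<beta> n))^2)"
    and sa: "summable (\<lambda>n. (cmod (\<alpha> n))^2)" and sb: "summable (\<lambda>n. (cmod (\<beta> n))^2)"
    and K: "0 \<le> K"
  shows "summable (\<lambda>k. (norm (b1 k, b2 k))^2)
       \<and> sqrt (\<Sum>k. (norm (b1 k, b2 k))^2) \<le> sqrt K * sqrt (\<Sum>n. (norm (\<alpha> n, \<beta> n))^2)"
proof -
  have e1: "(\<Sum>k. (norm (b1 k, b2 k))^2) = (\<Sum>k. (cmod (b1 k))^2) + (\<Sum>k. (cmod (b2 k))^2)"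
    unfolding norm_sq_pair by (rule suminf_add[OF s1 s2, symmetric])
  have e2: "(\<Sum>n. (norm (\<alpha> n, \<beta> n))^2) = (\<Sum>n. (cmod (\<alpha> n))^2) + (\<Sum>n. (cmod (\<beta> n))^2)"
    unfolding norm_sq_pair by (rule suminf_add[OF sa sb, symmetric])
  have "summable (\<lambda>k. (norm (b1 k, b2 k))^2)"
    unfolding norm_sq_pair by (rule summable_add[OF s1 s2])
  moreover have "sqrt (\<Sum>k. (norm (b1 k, b2 k))^2) \<le> sqrt (K * (\<Sum>n. (norm (\<alpha> n, \<beta> n))^2))"
    unfolding e1 e2 using l1 l2 by (intro real_sqrt_le_mono) (simp add: distrib_left)
  ultimately show ?thesis by (simp add: real_sqrt_mult)
qed

lemma slice_i0: "x \<in> slice i0 \<longleftrightarrow> snd x = 0"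
proof
  assume "x \<in> slice i0"
  then show "snd x = 0" by (auto simp: slice_def qreal_def i0_def)
next
  assume h: "snd x = 0"
  have "x = qreal (Re (fst x)) + Im (fst x) *\<^sub>R i0"
    using h by (cases x) (simp add: qreal_def i0_def complex_eq_iff)
  then show "x \<in> slice i0" unfolding slice_def by blast
qed

lemma norm_qreal: "norm (qreal x) = \<bar>x\<bar>"
  by (simp add: qreal_def)

theorem thm_i0:
  fixes c a :: "nat \<Rightarrow> quat"
  assumes phi_reg: "slice_regular_ball c"
    and phi_maps: "\<forall>q\<in>qball. pseries c q \<in> qball"
    and sl: "\<forall>q\<in>qball \<inter> slice i0. pseries c q \<in> slice i0"
    and f_H2: "in_H2 a"
  shows "(\<forall>k. summable (\<lambda>n. qmul (spow c n k) (a n)))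
         \<and> in_H2 (comp_right a c)
         \<and> H2_norm (comp_right a c)
             \<le> sqrt ((1 + norm (c 0)) / (1 - norm (c 0))) * H2_norm a
         \<and> (\<forall>k. summable (\<lambda>n. qmul (a n) (spow c n k)))
         \<and> in_H2 (comp_left a c)
         \<and> H2_norm (comp_left a c)
             \<le> sqrt ((1 + norm (c 0)) / (1 - norm (c 0))) * H2_norm a"
proof -
  have reg: "summable (\<lambda>n. qmul (qpow q n) (c n))" if "norm q < 1" for q
    using phi_reg that unfolding slice_regular_ball_def qball_def by blast
  have sc: "snd (c n) = 0" for n
  proof (rule powser_real_zero[where \<beta>="\<lambda>n. snd (c n)"])
    fix x :: real assume x: "\<bar>x\<bar> < 1"
    have tm: "snd (qmul (qpow (qreal x) n) (c n)) = snd (c n) * of_real x ^ n" for n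
      by (simp add: qpow_qreal qmul_qreal_left scaleR_conv_of_real mult.commute)
    have s: "summable (\<lambda>n. qmul (qpow (qreal x) n) (c n))" using x by (intro reg) (simp add: norm_qreal)
    show "summable (\<lambda>n. snd (c n) * of_real x ^ n)"
      using summable_snd[OF s] unfolding tm .
    have "qreal x \<in> qball \<inter> slice i0" using x by (simp add: qball_def norm_qreal slice_i0 qreal_def)
    then have "snd (pseries c (qreal x)) = 0" using sl slice_i0 by blast
    then show "(\<Sum>n. snd (c n) * of_real x ^ n) = 0"
      unfolding pseries_def suminf_snd[OF s] tm .
  qed
  define \<gamma> where "\<gamma> n = fst (c n)" for n
  have c_eq: "c n = (\<gamma> n, 0)" for n by (simp add: \<gamma>_def sc prod_eq_iff)
  have tmz: "qmul (qpow (z, 0) n) (c n) = (\<gamma> n * z^n, 0)" for z n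
    by (simp add: qpow_pair c_eq mult.commute)
  interpret sm: selfmap \<gamma>
  proof
    fix z :: complex assume z: "cmod z < 1"
    have s: "summable (\<lambda>n. qmul (qpow (z, 0) n) (c n))" using z by (intro reg) simp
    show "summable (\<lambda>n. \<gamma> n * z^n)" using summable_fst[OF s] by (simp add: tmz)
    have "(z, 0) \<in> qball" using z by (simp add: qball_def)
    then have "norm (pseries c (z, 0)) < 1" using phi_maps by (simp add: qball_def)
    moreover have "fst (pseries c (z, 0)) = (\<Sum>n. \<gamma> n * z^n)"
      unfolding pseries_def suminf_fst[OF s] by (simp add: tmz)
    moreover have "cmod (fst (pseries c (z, 0))) \<le> norm (pseries c (z, 0))"
      using norm_fst_le[of "fst (pseries c (z, 0))" "snd (pseries c (z, 0))"] by simp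
    ultimately show "cmod (\<Sum>n. \<gamma> n * z^n) < 1" by simp
  qed
  define \<gamma>' where "\<gamma>' n = cnj (\<gamma> n)" for n
  interpret sm': selfmap \<gamma>'
  proof
    fix z :: complex assume z: "cmod z < 1"
    have s: "summable (\<lambda>n. \<gamma> n * cnj z ^ n)" using z by (intro sm.A1) simp
    show "summable (\<lambda>n. \<gamma>' n * z^n)"
      using bounded_linear.summable[OF bounded_linear_cnj s] by (simp add: \<gamma>'_def)
    have "(\<Sum>n. \<gamma>' n * z^n) = cnj (\<Sum>n. \<gamma> n * cnj z ^ n)"
      using bounded_linear.suminf[OF bounded_linear_cnj s] by (simp add: \<gamma>'_def)
    then show "cmod (\<Sum>n. \<gamma>' n * z^n) < 1" using sm.A2[of "cnj z"] z by simp
  qed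
  have spow_eq: "spow c n k = (cspow \<gamma> n k, 0)" for n k
  proof (induction n arbitrary: k)
    case 0 then show ?case by (simp add: qone_def zero_prod_def)
  next
    case (Suc m)
    have "spow c (Suc m) k = (\<Sum>j\<le>k. (\<gamma> j * cspow \<gamma> m (k - j), 0))"
      by (simp add: sprod_def Suc c_eq)
    also have "\<dots> = (cspow \<gamma> (Suc m) k, 0)" by (simp add: sum_pair)
    finally show ?case .
  qed
  have cspow' : "cspow \<gamma>' n k = cnj (cspow \<gamma> n k)" for n k
    by (induction n arbitrary: k) (simp_all add: \<gamma>'_def cnj_sum)
  define \<alpha> where "\<alpha> n = fst (a n)" for n
  define \<beta> where "\<beta> n = snd (a n)" for n
  have a_eq: "a n = (\<alpha> n, \<beta> n)" for n by (simp add: \<alpha>_def \<beta>_def)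
  have sa2: "summable (\<lambda>n. (norm (a n))^2)" using f_H2 by (simp add: in_H2_def)
  have s\<alpha>: "summable (\<lambda>n. (cmod (\<alpha> n))^2)"
    by (rule summable_comparison_test'[OF sa2, where N=0]) (simp add: a_eq norm_sq_pair)
  have s\<beta>: "summable (\<lambda>n. (cmod (\<beta> n))^2)"
    by (rule summable_comparison_test'[OF sa2, where N=0]) (simp add: a_eq norm_sq_pair)
  have g'0: "cmod (\<gamma>' 0) = cmod (\<gamma> 0)" by (simp add: \<gamma>'_def)
  have nc0: "norm (c 0) = cmod (\<gamma> 0)" by (simp add: c_eq)
  define K where "K = (1 + cmod (\<gamma> 0)) / (1 - cmod (\<gamma> 0))"
  have K0: "0 \<le> K" unfolding K_def by (rule sm.C_nonneg)
  note R1 = sm.core[OF s\<alpha>] and R2 = sm.core[OF s\<beta>] and R3 = sm'.core[OF s\<beta>]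
  define b1 where "b1 k = (\<Sum>n. cspow \<gamma> n k * \<alpha> n)" for k
  define b2 where "b2 k = (\<Sum>n. cspow \<gamma> n k * \<beta> n)" for k
  define b3 where "b3 k = (\<Sum>n. cspow \<gamma>' n k * \<beta> n)" for k
  have tr: "qmul (spow c n k) (a n) = (cspow \<gamma> n k * \<alpha> n, cspow \<gamma> n k * \<beta> n)" for n k
    by (simp add: spow_eq a_eq)
  have tl: "qmul (a n) (spow c n k) = (cspow \<gamma> n k * \<alpha> n, cspow \<gamma>' n k * \<beta> n)" for n k
    by (simp add: spow_eq a_eq cspow' mult.commute)
  have PR: "summable (\<lambda>n. qmul (spow c n k) (a n)) \<and> comp_right a c k = (b1 k, b2 k)" for k
    unfolding comp_right_def tr b1_def b2_def using R1 R2 by (intro sums_pair) auto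
  have PL: "summable (\<lambda>n. qmul (a n) (spow c n k)) \<and> comp_left a c k = (b1 k, b3 k)" for k
    unfolding comp_left_def tl b1_def b3_def using R1 R3 by (intro sums_pair) auto
  have AR: "summable (\<lambda>k. (norm (b1 k, b2 k))^2)
       \<and> sqrt (\<Sum>k. (norm (b1 k, b2 k))^2) \<le> sqrt K * sqrt (\<Sum>n. (norm (\<alpha> n, \<beta> n))^2)"
    by (rule assemble[OF _ _ _ _ s\<alpha> s\<beta> K0]) (use R1 R2 in \<open>simp_all add: b1_def b2_def K_def\<close>)
  have AL: "summable (\<lambda>k. (norm (b1 k, b3 k))^2)
       \<and> sqrt (\<Sum>k. (norm (b1 k, b3 k))^2) \<le> sqrt K * sqrt (\<Sum>n. (norm (\<alpha> n, \<beta> n))^2)"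
    by (rule assemble[OF _ _ _ _ s\<alpha> s\<beta> K0]) (use R1 R3 g'0 in \<open>simp_all add: b1_def b3_def K_def\<close>)
  have Ha: "H2_norm a = sqrt (\<Sum>n. (norm (\<alpha> n, \<beta> n))^2)" by (simp add: H2_norm_def a_eq)
  have KK: "(1 + norm (c 0)) / (1 - norm (c 0)) = K" by (simp add: nc0 K_def)
  show ?thesis
    unfolding KK Ha
    using PR PL AR AL by (simp add: in_H2_def H2_norm_def)
qed

locale qrot =
  fixes u :: quat
  assumes nu: "norm u = 1"
begin

definition T :: "quat \<Rightarrow> quat" where "T x = qmul (qmul u x) (qconj u)"
definition S :: "quat \<Rightarrow> quat" where "S x = qmul (qmul (qconj u) x) u"

lemma uu1: "qmul u (qconj u) = qone" using nu by (simp add: qmul_conj_right qreal_1)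
lemma uu2: "qmul (qconj u) u = qone" using nu by (simp add: qmul_conj_left qreal_1)
lemma uu3: "qmul u (qmul (qconj u) y) = y" by (simp add: qmul_assoc[symmetric] uu1)
lemma uu4: "qmul (qconj u) (qmul u y) = y" by (simp add: qmul_assoc[symmetric] uu2)

lemma ST[simp]: "S (T x) = x" by (simp add: S_def T_def qmul_assoc uu2 uu4)
lemma TS[simp]: "T (S x) = x" by (simp add: S_def T_def qmul_assoc uu1 uu3)
lemma T_mul: "T (qmul x y) = qmul (T x) (T y)" by (simp add: T_def qmul_assoc uu4)
lemma T_add: "T (x + y) = T x + T y" by (simp add: T_def qmul_add_left qmul_add_right)
lemma T_zero[simp]: "T 0 = 0" by (simp add: T_def)
lemma T_scaleR: "T (r *\<^sub>R x) = r *\<^sub>R T x" by (simp add: T_def qmul_scaleR_left qmul_scaleR_right)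
lemma T_one[simp]: "T qone = qone" by (simp add: T_def uu1)
lemma T_qreal[simp]: "T (qreal r) = qreal r" by (simp add: qreal_eq T_scaleR)
lemma T_sum: "T (sum f A) = (\<Sum>i\<in>A. T (f i))"
  by (induct A rule: infinite_finite_induct) (simp_all add: T_add)
lemma norm_T[simp]: "norm (T x) = norm x" by (simp add: T_def norm_qmul nu)
lemma norm_S[simp]: "norm (S x) = norm x" by (simp add: S_def norm_qmul nu)
lemma bl_T: "bounded_linear T"
  unfolding T_def by (rule bounded_linear_compose[OF bl_qmul_left bl_qmul_right])
lemma bl_S: "bounded_linear S"
  unfolding S_def by (rule bounded_linear_compose[OF bl_qmul_left bl_qmul_right])
lemma T_qpow: "T (qpow x n) = qpow (T x) n"
  by (induct n) (simp_all add: T_mul)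

lemma summable_T_iff: "summable (\<lambda>n. T (f n)) \<longleftrightarrow> summable f"
proof
  assume "summable (\<lambda>n. T (f n))"
  from bounded_linear.summable[OF bl_S this] show "summable f" by simp
qed (rule bounded_linear.summable[OF bl_T])

lemma suminf_T: "summable f \<Longrightarrow> T (\<Sum>n. f n) = (\<Sum>n. T (f n))"
  by (rule bounded_linear.suminf[OF bl_T])

end

theorem theorem7p1:
  fixes c a :: "nat \<Rightarrow> quat"
  assumes phi_reg: "slice_regular_ball c"
    and phi_maps: "\<forall>q\<in>qball. pseries c q \<in> qball"
    and phi_slice: "\<exists>I\<in>imag_units. \<forall>q\<in>qball \<inter> slice I. pseries c q \<in> slice I"
    and f_H2: "in_H2 a"
  shows "(\<forall>k. summable (\<lambda>n. qmul (spow c n k) (a n)))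
         \<and> in_H2 (comp_right a c)
         \<and> H2_norm (comp_right a c)
             \<le> sqrt ((1 + norm (c 0)) / (1 - norm (c 0))) * H2_norm a
         \<and> (\<forall>k. summable (\<lambda>n. qmul (a n) (spow c n k)))
         \<and> in_H2 (comp_left a c)
         \<and> H2_norm (comp_left a c)
             \<le> sqrt ((1 + norm (c 0)) / (1 - norm (c 0))) * H2_norm a"
proof -
  obtain I where I: "I \<in> imag_units" and slI: "\<forall>q\<in>qball \<inter> slice I. pseries c q \<in> slice I"
    using phi_slice by blast
  obtain u where nu: "norm u = 1" and uI: "qmul u I = qmul i0 u"
    using unit_exists[of I] I by (auto simp: imag_units_def)
  interpret qrot u by unfold_locales (rule nu)
  have TI: "T I = i0" by (simp add: T_def uI qmul_assoc uu1)
  have T_slice: "T x \<in> slice i0" if h: "x \<in> slice I" for x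
  proof -
    obtain r s where x: "x = qreal r + s *\<^sub>R I" using h unfolding slice_def by blast
    have "T x = qreal r + s *\<^sub>R i0" by (simp add: x T_add T_scaleR TI)
    then show ?thesis by (auto simp: slice_def)
  qed
  have S_slice: "S x \<in> slice I" if h: "x \<in> slice i0" for x
  proof -
    obtain r s where x: "x = qreal r + s *\<^sub>R i0" using h unfolding slice_def by blast
    have "x = T (qreal r + s *\<^sub>R I)" by (simp add: x T_add T_scaleR TI)
    then have "S x = qreal r + s *\<^sub>R I" by simp
    then show ?thesis by (auto simp: slice_def)
  qed
  define c' where "c' n = T (c n)" for n
  define a' where "a' n = T (a n)" for n
  have tm: "qmul (qpow q n) (c' n) = T (qmul (qpow (S q) n) (c n))" for q n
    by (simp add: c'_def T_mul T_qpow)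
  have reg: "summable (\<lambda>n. qmul (qpow q n) (c n))" if "q \<in> qball" for q
    using phi_reg that unfolding slice_regular_ball_def by blast
  have Sball: "S q \<in> qball \<longleftrightarrow> q \<in> qball" for q by (simp add: qball_def)
  have ps: "pseries c' q = T (pseries c (S q))" if "q \<in> qball" for q
    unfolding pseries_def tm using that by (intro suminf_T[symmetric] reg) (simp add: Sball)
  have reg': "slice_regular_ball c'"
    unfolding slice_regular_ball_def tm summable_T_iff using reg Sball by blast
  have maps': "\<forall>q\<in>qball. pseries c' q \<in> qball"
  proof
    fix q assume q: "q \<in> qball"
    then have "pseries c (S q) \<in> qball" using phi_maps Sball by blast
    then show "pseries c' q \<in> qball" using ps[OF q] by (simp add: qball_def)
  qed
  have sl': "\<forall>q\<in>qball \<inter> slice i0. pseries c' q \<in> slice i0"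
    using slI ps Sball S_slice T_slice by auto
  have H2': "in_H2 a'" using f_H2 by (simp add: in_H2_def a'_def)
  note R = thm_i0[OF reg' maps' sl' H2']
  have sp: "spow c' n k = T (spow c n k)" for n k
  proof (induction n arbitrary: k)
    case 0 then show ?case by simp
  next
    case (Suc m)
    then show ?case by (simp add: sprod_def T_sum T_mul c'_def)
  qed
  have tr: "qmul (spow c' n k) (a' n) = T (qmul (spow c n k) (a n))" for n k
    by (simp add: sp a'_def T_mul)
  have tl: "qmul (a' n) (spow c' n k) = T (qmul (a n) (spow c n k))" for n k
    by (simp add: sp a'_def T_mul)
  have sr: "summable (\<lambda>n. qmul (spow c n k) (a n))" for k
    using R unfolding tr summable_T_iff by blast
  have sL: "summable (\<lambda>n. qmul (a n) (spow c n k))" for k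
    using R unfolding tl summable_T_iff by blast
  have cr: "norm (comp_right a' c' k) = norm (comp_right a c k)" for k
    unfolding comp_right_def tr suminf_T[OF sr, symmetric] by simp
  have cl: "norm (comp_left a' c' k) = norm (comp_left a c k)" for k
    unfolding comp_left_def tl suminf_T[OF sL, symmetric] by simp
  have n0: "norm (c' 0) = norm (c 0)" by (simp add: c'_def)
  have Ha: "H2_norm a' = H2_norm a" by (simp add: H2_norm_def a'_def)
  show ?thesis
    using R sr sL unfolding in_H2_def H2_norm_def cr cl n0
    using Ha by (simp add: H2_norm_def)
qed

end
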